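(* There are constants $0<c_1<c_2$ such that for all $n\ge1$ and all integers $0\le h\le n^2$, $\left(\frac{c_1 n^2}{n+h}\right)^{n+h}\le |\mathcal F^h_n| \le \left(\frac{c_2 n^2}{n+h}\right)^{n+h}$.
   Context: Graphs are finite and simple. For an integer $h\ge0$, $\mathcal F^h_n$ is the set of graphs $G$ on vertex set $[n]$ such that every cellular embedding of $G$ (components embedded separately, Euler genera added) has Euler genus at most $h$; equivalently, the cycle rank $e(G)-n+\kappa(G)$ is at most $h$, where $\kappa(G)$ is the number of components. *)

theory Defs
  imports Complex_Main
begin

definition simple_graph :: "'a set \<Rightarrow> 'a set set \<Rightarrow> bool" where
  "simple_graph V E \<longleftrightarrow> finite V \<and> (\<forall>e\<in>E. e \<subseteq> V \<and> card e = 2)"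

definition adj_rel :: "'a set set \<Rightarrow> ('a \<times> 'a) set" where
  "adj_rel E = {(u, v). {u, v} \<in> E}"

definition components :: "'a set \<Rightarrow> 'a set set \<Rightarrow> 'a set set" where
  "components V E = V // ((adj_rel E)\<^sup>* \<inter> (V \<times> V))"

definition num_components :: "'a set \<Rightarrow> 'a set set \<Rightarrow> nat" where
  "num_components V E = card (components V E)"

definition cycle_rank :: "'a set \<Rightarrow> 'a set set \<Rightarrow> int" where
  "cycle_rank V E = int (card E) - int (card V) + int (num_components V E)"

definition F_graphs :: "nat \<Rightarrow> nat \<Rightarrow> nat set set set" where
  "F_graphs h n = {E. simple_graph {1..n} E \<and> cycle_rank {1..n} E \<le> int h}"

end

theory Submission
  imports Defs "HOL-Library.FuncSet"
begin

lemma one_plus_pow_le_3: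
  assumes "n \<ge> 1"
  shows "(1 + 1 / real n) ^ n \<le> 3"
proof -
  have "(1 + 1 / real n) ^ n \<le> exp (1 / real n) ^ n"
    by (intro power_mono exp_ge_add_one_self) auto
  also have "\<dots> = exp (real n * (1 / real n))" by (simp only: exp_of_nat_mult)
  also have "\<dots> = exp 1" using assms by simp
  also have "\<dots> \<le> 3" by (rule exp_le)
  finally show ?thesis .
qed

lemma prod_half_bound:
  assumes "n \<ge> 1"
  shows "(real n / 12) ^ n \<le> real (\<Prod>v\<in>{2..n}. v div 2)"
  using assms
proof (induction n rule: dec_induct)
  case base
  then show ?case by simp
next
  case (step n)
  have n1: "real n \<ge> 1" using step by simp
  have eq: "((real (Suc n)) / 12) ^ Suc n = (real (Suc n) / 12) * (1 + 1 / real n) ^ n * (real n / 12) ^ n"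
  proof -
    have "real (Suc n) / 12 = (1 + 1 / real n) * (real n / 12)" using n1 by (simp add: field_simps)
    then have "(real (Suc n) / 12) ^ n = (1 + 1 / real n) ^ n * (real n / 12) ^ n"
      by (metis power_mult_distrib)
    then show ?thesis by simp
  qed
  have "(1 + 1 / real n) ^ n \<le> 3" using one_plus_pow_le_3 step by simp
  then have A: "(real (Suc n) / 12) * (1 + 1 / real n) ^ n \<le> (real (Suc n) / 12) * 3"
    by (rule mult_left_mono) simp
  have "((real (Suc n)) / 12) ^ Suc n \<le> (real (Suc n) / 12) * 3 * (real n / 12) ^ n"
    unfolding eq by (rule mult_right_mono[OF A]) simp
  also have "\<dots> \<le> real (Suc n div 2) * (real n / 12) ^ n"
  proof (intro mult_right_mono)
    have "n \<le> 2 * (Suc n div 2)" by presburger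
    then have "real n \<le> 2 * real (Suc n div 2)"
      by (metis of_nat_le_iff of_nat_mult of_nat_numeral)
    then have B: "real n / 2 \<le> real (Suc n div 2)" by simp
    have "real (Suc n) / 12 * 3 = (real n + 1) / 4" by simp
    also have "\<dots> \<le> real n / 2" using n1 by simp
    also have "\<dots> \<le> real (Suc n div 2)" by (rule B)
    finally show "real (Suc n) / 12 * 3 \<le> real (Suc n div 2)" .
  qed auto
  also have "\<dots> \<le> real (Suc n div 2) * real (\<Prod>v\<in>{2..n}. v div 2)"
    by (rule mult_left_mono[OF step.IH]) simp
  also have "\<dots> = real (\<Prod>v\<in>{2..Suc n}. v div 2)"
    using step by (simp add: prod.cl_ivl_Suc)
  finally show ?case .
qed

lemma sum_pow_card:
  assumes "finite A"
  shows "(\<Sum>X\<in>Pow A. (t::real) ^ card X) = (t + 1) ^ card A"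
  using prod_add[OF assms, of "\<lambda>_. t" "\<lambda>_. 1"] by simp

definition Par :: "nat \<Rightarrow> (nat \<Rightarrow> nat) set" where
  "Par n = PiE {2..n} (\<lambda>v. {1..v div 2})"

definition tree :: "(nat \<Rightarrow> nat) \<Rightarrow> nat \<Rightarrow> nat set set" where
  "tree p n = (\<lambda>v. {p v, v}) ` {2..n}"

definition UP :: "nat \<Rightarrow> nat set set" where
  "UP n = {e. e \<subseteq> {n div 2 + 1..n} \<and> card e = 2}"

lemma adj_sym: "(u, v) \<in> adj_rel E \<Longrightarrow> (v, u) \<in> adj_rel E"
  unfolding adj_rel_def by (simp add: insert_commute)

lemma rtr_sym: "(u, v) \<in> (adj_rel E)\<^sup>* \<Longrightarrow> (v, u) \<in> (adj_rel E)\<^sup>*"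
proof (induction rule: rtrancl_induct)
  case base
  then show ?case by simp
next
  case (step y z)
  then show ?case using adj_sym by (meson converse_rtrancl_into_rtrancl)
qed

lemma comp_le1:
  assumes "r \<in> V" "\<forall>v\<in>V. (r, v) \<in> (adj_rel E)\<^sup>*"
  shows "num_components V E \<le> 1"
proof -
  let ?R = "(adj_rel E)\<^sup>* \<inter> (V \<times> V)"
  have "components V E \<subseteq> {?R `` {r}}"
  proof
    fix C assume "C \<in> components V E"
    then have "C \<in> V // ?R" unfolding components_def .
    then obtain x where x: "x \<in> V" "C = ?R `` {x}"
      by (metis quotientE)
    have rx1: "(r, x) \<in> (adj_rel E)\<^sup>*" using assms(2) x(1) by (rule bspec)
    have rx: "(r, x) \<in> (adj_rel E)\<^sup>*" "(x, r) \<in> (adj_rel E)\<^sup>*"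
      using rx1 rtr_sym[OF rx1] by auto
    have "?R `` {x} = ?R `` {r}"
      using rx assms(1) x(1) by (auto intro: rtrancl_trans)
    then show "C \<in> {?R `` {r}}" using x by simp
  qed
  then have "card (components V E) \<le> card {?R `` {r}}" by (intro card_mono) auto
  then show ?thesis unfolding num_components_def by simp
qed

lemma Par_D:
  assumes "p \<in> Par n" "v \<in> {2..n}"
  shows "1 \<le> p v" "p v \<le> v div 2"
  using assms unfolding Par_def by auto

lemma tree_conn:
  assumes "p \<in> Par n" "tree p n \<subseteq> E"
  shows "\<forall>v\<in>{1..n}. (1, v) \<in> (adj_rel E)\<^sup>*"
proof
  fix v assume "v \<in> {1..n}"
  then show "(1, v) \<in> (adj_rel E)\<^sup>*"
  proof (induction v rule: less_induct)
    case (less v)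
    show ?case
    proof (cases "v = 1")
      case True
      then show ?thesis by simp
    next
      case False
      then have v2: "v \<in> {2..n}" using less.prems by auto
      have pv: "1 \<le> p v" "p v \<le> v div 2" using Par_D[OF assms(1) v2] by auto
      have "(1, p v) \<in> (adj_rel E)\<^sup>*" using less.IH[of "p v"] pv v2 by auto
      moreover have "{p v, v} \<in> E" using assms(2) v2 unfolding tree_def by auto
      then have "(p v, v) \<in> adj_rel E" unfolding adj_rel_def by simp
      ultimately show ?thesis by (rule rtrancl_into_rtrancl)
    qed
  qed
qed

lemma mem_F:
  assumes "p \<in> Par n" "S \<subseteq> UP n" "card S \<le> h" "n \<ge> 1"
  shows "tree p n \<union> S \<in> F_graphs h n"
proof -
  let ?E = "tree p n \<union> S"
  have finUP: "finite (UP n)" unfolding UP_def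
    by (rule finite_subset[of _ "Pow {1..n}"]) auto
  have finS: "finite S" using finite_subset[OF assms(2) finUP] .
  have sg0: "\<forall>e\<in>?E. e \<subseteq> {1..n} \<and> card e = 2"
  proof
    fix e assume "e \<in> ?E"
    then show "e \<subseteq> {1..n} \<and> card e = 2"
    proof
      assume "e \<in> tree p n"
      then obtain v where v: "v \<in> {2..n}" "e = {p v, v}" unfolding tree_def by auto
      have pv: "1 \<le> p v" "p v \<le> v div 2" using Par_D[OF assms(1) v(1)] by auto
      then have "p v \<noteq> v" using v by auto
      then show ?thesis using v pv by auto
    next
      assume "e \<in> S"
      then have "e \<subseteq> {n div 2 + 1..n}" "card e = 2" using assms(2) unfolding UP_def by auto
      moreover have "{n div 2 + 1..n} \<subseteq> {1..n}" by auto
      ultimately show ?thesis by blast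
    qed
  qed
  then have sg: "simple_graph {1..n} ?E" unfolding simple_graph_def by simp
  have ct: "card (tree p n) \<le> n - 1"
    unfolding tree_def using card_image_le[of "{2..n}" "\<lambda>v. {p v, v}"] by simp
  have cE: "card ?E \<le> (n - 1) + h"
    using card_Un_le[of "tree p n" S] ct assms(3) by linarith
  have k: "num_components {1..n} ?E \<le> 1"
    by (rule comp_le1[of 1]) (use assms(4) tree_conn[OF assms(1), of ?E] in auto)
  have "cycle_rank {1..n} ?E \<le> int h"
    unfolding cycle_rank_def using cE k assms(4) by simp
  then show ?thesis unfolding F_graphs_def using sg by simp
qed

lemma tree_UP_disj:
  assumes "p \<in> Par n"
  shows "tree p n \<inter> UP n = {}"
proof -
  have "e \<notin> UP n" if e: "e \<in> tree p n" for e
  proof -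
    obtain v where v: "v \<in> {2..n}" "e = {p v, v}" using e unfolding tree_def by blast
    have "p v \<le> v div 2" using Par_D[OF assms v(1)] by auto
    also have "\<dots> \<le> n div 2" using v(1) by (auto intro: div_le_mono)
    finally have "p v \<notin> {n div 2 + 1..n}" by auto
    then show ?thesis using v unfolding UP_def by auto
  qed
  then show ?thesis by blast
qed

lemma tree_inj:
  assumes p: "p \<in> Par n" and q: "q \<in> Par n" and S: "S \<subseteq> UP n" and T: "T \<subseteq> UP n"
    and eq: "tree p n \<union> S = tree q n \<union> T"
  shows "p = q \<and> S = T"
proof -
  have pq: "p v = q v" if v: "v \<in> {2..n}" for v
  proof -
    have "{p v, v} \<in> tree p n" using v unfolding tree_def by blast
    then have m1: "{p v, v} \<in> tree q n \<union> T" using eq by blast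
    have m2: "{p v, v} \<notin> T"
      using tree_UP_disj[OF p] T \<open>{p v, v} \<in> tree p n\<close> by blast
    from m1 m2 have "{p v, v} \<in> tree q n" by blast
    then obtain w where w: "w \<in> {2..n}" "{p v, v} = {q w, w}"
      unfolding tree_def by blast
    have pv: "1 \<le> p v" "p v \<le> v div 2" using Par_D[OF p v] by auto
    have qw: "1 \<le> q w" "q w \<le> w div 2" using Par_D[OF q w(1)] by auto
    from w(2) have "(p v = q w \<and> v = w) \<or> (p v = w \<and> v = q w)"
      by (simp add: doubleton_eq_iff)
    then show ?thesis
    proof
      assume a: "p v = w \<and> v = q w"
      have "v \<le> w div 2" using a qw by simp
      also have "\<dots> \<le> w" by simp
      also have "w \<le> v div 2" using a pv(2) by metis
      also have "\<dots> < v" using v by simp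
      finally show ?thesis by simp
    qed auto
  qed
  have "p = q"
  proof (rule PiE_ext)
    show "p \<in> PiE {2..n} (\<lambda>v. {1..v div 2})" using p unfolding Par_def .
    show "q \<in> PiE {2..n} (\<lambda>v. {1..v div 2})" using q unfolding Par_def .
  qed (use pq in auto)
  moreover have "S = T"
  proof -
    have "S = (tree p n \<union> S) - tree p n" using tree_UP_disj[OF p] S by auto
    also have "\<dots> = (tree q n \<union> T) - tree q n" using eq \<open>p = q\<close> by simp
    also have "\<dots> = T" using tree_UP_disj[OF q] T by auto
    finally show ?thesis .
  qed
  ultimately show ?thesis by simp
qed

lemma F_sub: "F_graphs h n \<subseteq> Pow (Pow {1..n})"
  unfolding F_graphs_def simple_graph_def by blast

lemma F_fin: "finite (F_graphs h n)"
  by (rule finite_subset[OF F_sub]) simp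

lemma exp_half_le: "exp (1/2 :: real) \<le> 2"
proof -
  have "exp (1/2 :: real) ^ 2 = exp (real 2 * (1/2))" by (simp only: exp_of_nat_mult)
  also have "\<dots> = exp 1" by simp
  also have "\<dots> \<le> 2 ^ 2" using exp_le by simp
  finally have "exp (1/2 :: real) ^ 2 \<le> 2 ^ 2" .
  then show ?thesis by (rule power2_le_imp_le) simp
qed

lemma upper:
  assumes n: "n \<ge> 1" and h: "h \<le> n ^ 2"
  shows "real (card (F_graphs h n)) \<le> (4 * real n ^ 2 / real (n + h)) ^ (n + h)"
proof -
  define M where "M = n + h"
  define P where "P = {e. e \<subseteq> {1..n::nat} \<and> card e = 2}"
  define X where "X = {E. E \<subseteq> P \<and> card E \<le> M}"
  define t :: real where "t = real M / (2 * real n ^ 2)"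
  have finP: "finite P" unfolding P_def by (rule finite_subset[of _ "Pow {1..n}"]) auto
  have FX: "F_graphs h n \<subseteq> X"
  proof
    fix E assume E: "E \<in> F_graphs h n"
    then have "E \<subseteq> P" unfolding F_graphs_def simple_graph_def P_def by auto
    moreover have "card E \<le> M"
      using E unfolding F_graphs_def cycle_rank_def M_def by simp
    ultimately show "E \<in> X" unfolding X_def by simp
  qed
  have finX: "finite X" unfolding X_def using finP by simp
  have Mpos: "real M \<ge> 1" unfolding M_def using n by simp
  have M2: "real M \<le> 2 * real n ^ 2"
  proof -
    have "real M \<le> real n + real n ^ 2" unfolding M_def using h
      by (metis of_nat_add of_nat_le_iff of_nat_power add_left_mono)
    moreover have "real n \<le> real n ^ 2" using n by (simp add: power2_eq_square)
    ultimately show ?thesis by linarith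
  qed
  have npos: "real n ^ 2 > 0" using n by simp
  have t0: "t > 0" unfolding t_def using Mpos npos by simp
  have t1: "t \<le> 1" unfolding t_def using M2 npos by simp
  have "real (card (F_graphs h n)) \<le> real (card X)"
    using card_mono[OF finX FX] by simp
  also have "real (card X) = (\<Sum>E\<in>X. 1)" by simp
  also have "\<dots> \<le> (\<Sum>E\<in>X. t ^ card E / t ^ M)"
  proof (rule sum_mono)
    fix E assume "E \<in> X"
    then have "card E \<le> M" unfolding X_def by simp
    then have "t ^ M \<le> t ^ card E" using t0 t1 by (intro power_decreasing) auto
    then show "1 \<le> t ^ card E / t ^ M" using t0 by simp
  qed
  also have "\<dots> \<le> (\<Sum>E\<in>Pow P. t ^ card E / t ^ M)"
    by (rule sum_mono2) (use finP t0 in \<open>auto simp: X_def\<close>)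
  also have "\<dots> = (\<Sum>E\<in>Pow P. t ^ card E) / t ^ M" by (simp add: sum_divide_distrib)
  also have "\<dots> = (t + 1) ^ card P / t ^ M" by (simp add: sum_pow_card[OF finP])
  also have "\<dots> \<le> exp (1/2) ^ M / t ^ M"
  proof (rule divide_right_mono)
    have cP: "card P = n choose 2" unfolding P_def using n_subsets[of "{1..n}" 2] by simp
    have cP2: "real (card P) \<le> real n ^ 2"
    proof (cases "2 \<le> n")
      case True
      then show ?thesis unfolding cP using binomial_le_pow[of 2 n]
        by (metis of_nat_le_iff of_nat_power)
    next
      case False
      then have "n choose 2 = 0" by (simp add: binomial_eq_0)
      then have z: "real (n choose 2) = 0" by (simp only: of_nat_0)
      show ?thesis unfolding cP z by simp
    qed
    have "(t + 1) ^ card P \<le> exp t ^ card P"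
      using t0 by (intro power_mono) (auto simp: add.commute[of t] exp_ge_add_one_self)
    also have "\<dots> = exp (real (card P) * t)" by (simp only: exp_of_nat_mult)
    also have "\<dots> \<le> exp (real n ^ 2 * t)"
      using cP2 t0 by (simp add: mult_right_mono)
    also have "real n ^ 2 * t = real M * (1/2)" unfolding t_def using npos by simp
    also have "exp (real M * (1/2)) = exp (1/2) ^ M" by (simp only: exp_of_nat_mult)
    finally show "(t + 1) ^ card P \<le> exp (1/2) ^ M" .
  qed (use t0 in \<open>simp only: zero_le_power less_imp_le\<close>)
  also have "\<dots> = (exp (1/2) / t) ^ M" by (simp add: power_divide)
  also have "\<dots> \<le> (4 * real n ^ 2 / real (n + h)) ^ (n + h)"
  proof -
    have "exp (1/2) / t = exp (1/2) * (2 * real n ^ 2 / real M)"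
      unfolding t_def by simp
    also have "\<dots> \<le> 2 * (2 * real n ^ 2 / real M)"
      using exp_half_le npos Mpos by (intro mult_right_mono) auto
    also have "2 * (2 * real n ^ 2 / real M) = 4 * real n ^ 2 / real (n + h)"
      unfolding M_def by simp
    finally have le: "exp (1/2) / t \<le> 4 * real n ^ 2 / real (n + h)" .
    have "0 \<le> exp (1/2) / t" using t0 by simp
    from power_mono[OF le this] show ?thesis unfolding M_def .
  qed
  finally show ?thesis .
qed


lemma F_nonempty:
  assumes n: "n \<ge> 1"
  shows "card (F_graphs h n) \<ge> 1"
proof -
  define p0 where "p0 = restrict (\<lambda>_. 1::nat) {2..n}"
  have "p0 \<in> Par n" unfolding Par_def p0_def by auto
  then have "tree p0 n \<union> {} \<in> F_graphs h n" using n by (intro mem_F) auto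
  then have "F_graphs h n \<noteq> {}" by blast
  then show ?thesis using F_fin[of h n] by (simp add: Suc_le_eq card_gt_0_iff)
qed

lemma card_Par: "card (Par n) = (\<Prod>v\<in>{2..n}. v div 2)"
  unfolding Par_def by (simp add: card_PiE)

lemma card_UP: "card (UP n) = (n - n div 2) choose 2"
  unfolding UP_def using n_subsets[of "{n div 2 + 1..n}" 2] by simp

lemma lower:
  assumes n: "n \<ge> 1" and h: "h \<le> n ^ 2"
  shows "(1/16 * real n ^ 2 / real (n + h)) ^ (n + h) \<le> real (card (F_graphs h n))"
proof -
  define b where "b = 1/16 * real n ^ 2 / real (n + h)"
  have npos: "real n > 0" using n by simp
  have b0: "b \<ge> 0" unfolding b_def by simp
  show ?thesis
  proof (cases "b \<le> 1")
    case True
    have "b ^ (n + h) \<le> 1" using b0 True by (rule power_le_one)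
    also have "1 \<le> real (card (F_graphs h n))" using F_nonempty[OF n, of h] by simp
    finally show ?thesis unfolding b_def .
  next
    case False
    have nh: "real n + real h > 0" using npos by simp
    have big: "16 * (real n + real h) < real n ^ 2"
      using False nh unfolding b_def by (simp add: field_simps)
    have n16: "real n \<ge> 16"
    proof -
      have "16 * real n < real n * real n" using big by (simp add: power2_eq_square)
      then show ?thesis using npos by simp
    qed
    have h16: "16 * real h < real n ^ 2" using big npos by simp
    define k where "k = n - n div 2"
    have k2: "2 * real k \<ge> real n"
    proof -
      have "n \<le> 2 * k" unfolding k_def by presburger
      then show ?thesis by (metis of_nat_le_iff of_nat_mult of_nat_numeral)
    qed
    have kge2: "2 \<le> k" using k2 n16 by simp
    define N where "N = card (UP n)"
    have NK: "N = k choose 2" unfolding N_def k_def by (rule card_UP)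
    have N16: "real n ^ 2 / 16 \<le> real N"
    proof -
      have "(real k / real 2) ^ 2 \<le> real (k choose 2)"
        using binomial_ge_n_over_k_pow_k[of 2 k] kge2 by simp
      moreover have "real n / 4 \<le> real k / real 2" using k2 by simp
      then have "(real n / 4) ^ 2 \<le> (real k / real 2) ^ 2"
        using npos by (intro power_mono) auto
      ultimately have "(real n / 4) ^ 2 \<le> real N" unfolding NK by linarith
      then show ?thesis by (simp add: power_divide)
    qed
    have hN: "h \<le> N" using N16 h16 by simp
    define SS where "SS = {S. S \<subseteq> UP n \<and> card S = h}"
    have finUP: "finite (UP n)" unfolding UP_def
      by (rule finite_subset[of _ "Pow {1..n}"]) auto
    have cSS: "card SS = N choose h" unfolding SS_def N_def using n_subsets[OF finUP] .
    define G where "G = (\<lambda>(p, S). tree p n \<union> S) ` (Par n \<times> SS)"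
    have GF: "G \<subseteq> F_graphs h n"
      unfolding G_def SS_def using n by (auto intro!: mem_F)
    have inj: "inj_on (\<lambda>(p, S). tree p n \<union> S) (Par n \<times> SS)"
      unfolding SS_def by (rule inj_onI) (auto dest: tree_inj)
    have cG: "card G = card (Par n) * card SS"
      unfolding G_def using card_image[OF inj] by (simp add: card_cartesian_product)
    have bn: "b \<le> real n / 12"
    proof -
      have "b \<le> 1/16 * real n ^ 2 / real n" unfolding b_def using npos
        by (intro divide_left_mono) auto
      also have "\<dots> = real n / 16" by (simp add: power2_eq_square)
      finally show ?thesis using npos by simp
    qed
    have b1: "b ^ n \<le> real (card (Par n))"
    proof -
      have "b ^ n \<le> (real n / 12) ^ n" using bn b0 by (intro power_mono) auto
      also have "\<dots> \<le> real (card (Par n))" unfolding card_Par by (rule prod_half_bound[OF n])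
      finally show ?thesis .
    qed
    have b2: "b ^ h \<le> real (card SS)"
    proof (cases "h = 0")
      case True
      then show ?thesis unfolding cSS by simp
    next
      case False
      then have hpos: "real h > 0" by simp
      have "b \<le> 1/16 * real n ^ 2 / real h" unfolding b_def using hpos
        by (intro divide_left_mono) auto
      also have "\<dots> \<le> real N / real h" using N16 hpos by (intro divide_right_mono) auto
      finally have "b ^ h \<le> (real N / real h) ^ h" using b0 by (intro power_mono) auto
      also have "\<dots> \<le> real (N choose h)" by (rule binomial_ge_n_over_k_pow_k[OF hN])
      finally show ?thesis unfolding cSS .
    qed
    have "b ^ (n + h) = b ^ n * b ^ h" by (rule power_add)
    also have "\<dots> \<le> real (card (Par n)) * real (card SS)"
      by (rule mult_mono[OF b1 b2]) (use b0 in \<open>simp_all add: zero_le_power\<close>)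
    also have "\<dots> = real (card G)" unfolding cG by (simp only: of_nat_mult)
    also have "\<dots> \<le> real (card (F_graphs h n))" using card_mono[OF F_fin GF] by (simp only: of_nat_le_iff)
    finally show ?thesis unfolding b_def .
  qed
qed

theorem proposition3:
  shows "\<exists>c1 c2 :: real. 0 < c1 \<and> c1 < c2 \<and>
    (\<forall>n h :: nat. 1 \<le> n \<longrightarrow> h \<le> n ^ 2 \<longrightarrow>
       (c1 * real n ^ 2 / real (n + h)) ^ (n + h) \<le> real (card (F_graphs h n)) \<and>
       real (card (F_graphs h n)) \<le> (c2 * real n ^ 2 / real (n + h)) ^ (n + h))"
proof (rule exI[of _ "1/16"], rule exI[of _ 4], intro conjI allI impI)
  fix n h :: nat assume "1 \<le> n" "h \<le> n ^ 2"
  then show "(1/16 * real n ^ 2 / real (n + h)) ^ (n + h) \<le> real (card (F_graphs h n))"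
    by (rule lower)
  from \<open>1 \<le> n\<close> \<open>h \<le> n ^ 2\<close>
  show "real (card (F_graphs h n)) \<le> (4 * real n ^ 2 / real (n + h)) ^ (n + h)"
    by (rule upper)
qed auto

end
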